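(* Let $G$ be the graph on $\{1,2,3,4\}$ with edge set $E=\{\{1,2\},\{2,3\},\{1,3\},\{3,4\},\{1,4\}\}$. If $x\in(\mathbb{R}^2)^4$ satisfies $\delta|_E(x)\in\mathcal L_0$, then $x$ is infinitesimally rigid, i.e. the Jacobian $\frac{\partial\,\delta|_E}{\partial x}(x)\in\mathbb{R}^{5\times 8}$ has rank $2\cdot4-3=5$.
   Context: For $x=(x_1,\dots,x_n)\in(\mathbb{R}^2)^n$ and a graph $G=(V,E)$ on $V=\{1,\dots,n\}$, $\delta|_E(x)=\big(\tfrac12\|x_i-x_j\|^2\big)_{\{i,j\}\in E}$. $\mathcal L=\{\delta|_E(x):x\in(\mathbb{R}^2)^n\}\subset\mathbb{R}^{|E|}$ and $\mathcal L_0$ denotes its interior in $\mathbb{R}^{|E|}$. The matrix $\frac{\partial\,\delta|_E}{\partial x}$ is the rigidity matrix. *)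

theory Defs
  imports "HOL-Analysis.Analysis" "HOL-Library.Numeral_Type"
begin

(* Vertices 1,2,3,4 are the elements of the numeral type 4 (where 4 = 0).
   Edges are indexed by the numeral type 5, in the order
   {1,2},{2,3},{1,3},{3,4},{1,4}. *)
definition edgeE :: "5 \<Rightarrow> 4 \<times> 4" where
  "edgeE k = (if k = 1 then (1,2) else if k = 2 then (2,3) else if k = 3 then (1,3)
              else if k = 4 then (3,4) else (1,4))"

definition deltaE :: "(real^2)^4 \<Rightarrow> real^5" where
  "deltaE x = (\<chi> k. (case edgeE k of (i, j) \<Rightarrow> (1/2) * (norm (x$i - x$j))\<^sup>2))"

end

theory Submission imports Defs begin
lemma nth_der: "((\<lambda>x. x $ a) has_derivative (\<lambda>h. h $ a)) F"
  by (rule bounded_linear.has_derivative[OF bounded_linear_vec_nth has_derivative_ident])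
lemma comp_der:
  fixes a b :: 4
  shows "((\<lambda>x::(real^2)^4. (1/2) * (norm (x$a - x$b))\<^sup>2) has_derivative (\<lambda>h. (x$a - x$b) \<bullet> (h$a - h$b))) (at x)"
proof -
  have "((\<lambda>x::(real^2)^4. (1/2) * ((x$a - x$b) \<bullet> (x$a - x$b))) has_derivative (\<lambda>h. (1/2) * ((x$a - x$b) \<bullet> (h$a - h$b) + (h$a - h$b) \<bullet> (x$a - x$b)))) (at x)"
    by (rule nth_der derivative_eq_intros refl)+
  then show ?thesis by (simp add: power2_norm_eq_inner inner_commute)
qed

definition DD :: "(real^2)^4 \<Rightarrow> (real^2)^4 \<Rightarrow> real^5" where
  "DD x h = (\<chi> k. (case edgeE k of (i, j) \<Rightarrow> (x$i - x$j) \<bullet> (h$i - h$j)))"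

lemma deltaE_der: "(deltaE has_derivative DD x) (at x)"
proof -
  have "((\<lambda>y. deltaE y $ k) has_derivative (\<lambda>h. DD x h $ k)) (at x)" for k
  proof (cases "edgeE k")
    case (Pair a b)
    show ?thesis using comp_der[of a b x] by (simp add: deltaE_def DD_def Pair)
  qed
  then show ?thesis
    by (subst has_derivative_componentwise_within) (auto simp: Basis_vec_def inner_axis)
qed

lemma exhaust_5:
  fixes x :: 5
  shows "x = 1 \<or> x = 2 \<or> x = 3 \<or> x = 4 \<or> x = 5"
proof (induct x)
  case (of_int z)
  then have "z = 0 \<or> z = 1 \<or> z = 2 \<or> z = 3 \<or> z = 4" by fastforce
  then show ?case by auto
qed

lemma forall_5: "(\<forall>i::5. P i) \<longleftrightarrow> P 1 \<and> P 2 \<and> P 3 \<and> P 4 \<and> P 5"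
  by (metis exhaust_5)

lemma dim5: "dim (UNIV :: (real^5) set) = 5" by simp
definition Q :: "real \<Rightarrow> real \<Rightarrow> real \<Rightarrow> real" where
  "Q a b c = 2*(a*b+b*c+c*a) - a^2 - b^2 - c^2"
definition cr :: "real^2 \<Rightarrow> real^2 \<Rightarrow> real" where
  "cr u v = u$1 * v$2 - u$2 * v$1"

lemma norm_sq2: "(norm (v::real^2))^2 = (v$1)^2 + (v$2)^2"
  by (simp add: norm_vec_def L2_set_def sum_2)

lemma dE: "deltaE z $ 1 = (1/2) * (norm (z$1 - z$2))^2"
  "deltaE z $ 2 = (1/2) * (norm (z$2 - z$3))^2"
  "deltaE z $ 3 = (1/2) * (norm (z$1 - z$3))^2"
  "deltaE z $ 4 = (1/2) * (norm (z$3 - z$4))^2"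
  "deltaE z $ 5 = (1/2) * (norm (z$1 - z$4))^2"
  by (simp_all add: deltaE_def edgeE_def)

lemma heron1: "Q (deltaE z $ 1) (deltaE z $ 2) (deltaE z $ 3) = (cr (z$1 - z$2) (z$2 - z$3))^2"
  unfolding dE norm_sq2 Q_def cr_def by (simp add: power2_eq_square algebra_simps)
lemma heron2: "Q (deltaE z $ 3) (deltaE z $ 4) (deltaE z $ 5) = (cr (z$1 - z$3) (z$3 - z$4))^2"
  unfolding dE norm_sq2 Q_def cr_def by (simp add: power2_eq_square algebra_simps)

lemma collinear_bad:
  fixes p :: "real^5" and S :: "(real^5) set"
  assumes S: "\<And>y. y \<in> S \<Longrightarrow> Q (y$a) (y$b) (y$c) \<ge> 0 \<and> y$a \<ge> 0 \<and> y$b \<ge> 0 \<and> y$c \<ge> 0"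
    and d: "a \<noteq> b" "a \<noteq> c" "b \<noteq> c"
    and p: "p \<in> interior S" and q: "Q (p$a) (p$b) (p$c) = 0"
  shows False
proof -
  define w :: "real^5" where "w = (\<chi> k. if k = a \<or> k = b \<or> k = c then -1 else 0)"
  have ps: "p \<in> S" using p interior_subset by blast
  have "((\<lambda>t. p + t *\<^sub>R w) \<longlongrightarrow> p + 0 *\<^sub>R w) (at_right 0)"
    by (intro tendsto_intros)
  then have "\<forall>\<^sub>F t in at_right 0. p + t *\<^sub>R w \<in> interior S"
    using p by (auto intro: topological_tendstoD)
  then obtain b0 where b0: "b0 > 0" "\<And>t. 0 < t \<Longrightarrow> t < b0 \<Longrightarrow> p + t *\<^sub>R w \<in> interior S"
    by (auto simp: eventually_at_right_field)
  have comp: "(p + t *\<^sub>R w) $ a = p$a - t" "(p + t *\<^sub>R w) $ b = p$b - t" "(p + t *\<^sub>R w) $ c = p$c - t" for t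
    by (auto simp: w_def)
  have pos: "p$a \<ge> 0" "p$b \<ge> 0" "p$c \<ge> 0" using S[OF ps] by auto
  have mem: "0 < t \<Longrightarrow> t < b0 \<Longrightarrow> Q (p$a - t) (p$b - t) (p$c - t) \<ge> 0 \<and> p$a - t \<ge> 0" for t
    using S[of "p + t *\<^sub>R w"] b0(2)[of t] interior_subset comp by fastforce
  have qid: "Q (p$a - t) (p$b - t) (p$c - t) = Q (p$a) (p$b) (p$c) - 2*t*(p$a+p$b+p$c) + 3*t^2" for t
    by (simp add: Q_def power2_eq_square algebra_simps)
  show False
  proof (cases "p$a+p$b+p$c = 0")
    case True
    then have "p$a = 0" using pos by linarith
    then show False using mem[of "b0/2"] b0 by simp
  next
    case False
    then have s: "p$a+p$b+p$c > 0" using pos by linarith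
    define t where "t = min (b0/2) ((p$a+p$b+p$c)/2)"
    have tl: "t \<le> (p$a+p$b+p$c)/2" unfolding t_def by (rule min.cobounded2)
    have t: "0 < t" "t < b0" "t < 2*(p$a+p$b+p$c)/3" using b0 s tl unfolding t_def by auto
    have "Q (p$a - t) (p$b - t) (p$c - t) = t * (3*t - 2*(p$a+p$b+p$c))"
      using qid[of t] q by (simp add: power2_eq_square algebra_simps)
    also have "\<dots> < 0" using t by (intro mult_pos_neg) auto
    finally show False using mem[OF t(1,2)] by linarith
  qed
qed
definition mk :: "real \<Rightarrow> real \<Rightarrow> real^2" where "mk a b = (\<chi> i. if i = 1 then a else b)"
lemma mk_nth[simp]: "mk a b $ 1 = a" "mk a b $ 2 = b" by (simp_all add: mk_def)
lemma inner2: "(u::real^2) \<bullet> v = u$1 * v$1 + u$2 * v$2" by (simp add: inner_vec_def sum_2)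

lemma DD_comp: "DD x h $ 1 = (x$1 - x$2) \<bullet> (h$1 - h$2)"
  "DD x h $ 2 = (x$2 - x$3) \<bullet> (h$2 - h$3)"
  "DD x h $ 3 = (x$1 - x$3) \<bullet> (h$1 - h$3)"
  "DD x h $ 4 = (x$3 - x$4) \<bullet> (h$3 - h$4)"
  "DD x h $ 5 = (x$1 - x$4) \<bullet> (h$1 - h$4)"
  by (simp_all add: DD_def edgeE_def)

lemma surj_DD:
  assumes c1: "cr (x$1 - x$2) (x$2 - x$3) \<noteq> 0" and c2: "cr (x$1 - x$3) (x$3 - x$4) \<noteq> 0"
  shows "surj (DD x)"
proof (rule surjI)
  fix w :: "real^5"
  define u where "u = x$1 - x$3"
  define p where "p = x$1 - x$2"
  define q where "q = x$2 - x$3"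
  define r where "r = x$3 - x$4"
  define s where "s = x$1 - x$4"
  have un: "(u$1)^2 + (u$2)^2 \<noteq> 0"
  proof
    assume "(u$1)^2 + (u$2)^2 = 0"
    then have "u$1 = 0" "u$2 = 0" by (auto simp: add_nonneg_eq_0_iff)
    then show False using c2 by (simp add: cr_def u_def)
  qed
  define h3 where "h3 = mk (- w$3 / ((u$1)^2 + (u$2)^2) * u$1) (- w$3 / ((u$1)^2 + (u$2)^2) * u$2)"
  define d where "d = p$1*q$2 - p$2*q$1"
  have d: "d \<noteq> 0" using c1 by (simp add: cr_def d_def p_def q_def)
  define \<alpha> where "\<alpha> = - w$1"
  define \<beta> where "\<beta> = w$2 + q \<bullet> h3"
  define h2 where "h2 = mk ((\<alpha>*q$2 - \<beta>*p$2)/d) ((\<beta>*p$1 - \<alpha>*q$1)/d)"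
  define e where "e = s$1*r$2 - s$2*r$1"
  have e: "e \<noteq> 0" using c2 by (simp add: cr_def e_def s_def r_def u_def algebra_simps)
  define \<gamma> where "\<gamma> = - w$5"
  define \<delta> where "\<delta> = r \<bullet> h3 - w$4"
  define h4 where "h4 = mk ((\<gamma>*r$2 - \<delta> * s$2)/e) ((\<delta> * s$1 - \<gamma>*r$1)/e)"
  define h :: "(real^2)^4" where "h = (\<chi> i. if i = 2 then h2 else if i = 3 then h3 else if i = 4 then h4 else 0)"
  have hv: "h$1 = 0" "h$2 = h2" "h$3 = h3" "h$4 = h4" by (simp_all add: h_def)
  have "DD x h $ k = w $ k" for k
  proof -
    have 1: "DD x h $ 1 = w $ 1"
      unfolding DD_comp hv p_def[symmetric] using d
      by (simp add: inner2 h2_def \<alpha>_def field_simps) (simp add: d_def algebra_simps)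
    have 2: "DD x h $ 2 = w $ 2"
      unfolding DD_comp hv q_def[symmetric] using d
      by (simp add: inner_diff_right h2_def \<beta>_def inner2 field_simps) (simp add: d_def algebra_simps)
    have 3: "DD x h $ 3 = w $ 3"
    proof -
      define N where "N = (u$1)^2 + (u$2)^2"
      define c where "c = - w$3 / N"
      have "c * N = - w$3" using un by (simp add: N_def c_def)
      moreover have "u$1 * (c * u$1) + u$2 * (c * u$2) = c * N"
        unfolding N_def by (simp add: power2_eq_square algebra_simps)
      ultimately show ?thesis unfolding DD_comp hv u_def[symmetric] h3_def N_def[symmetric] c_def[symmetric]
        by (simp add: inner2)
    qed
    have 4: "DD x h $ 4 = w $ 4"
      unfolding DD_comp hv r_def[symmetric] using e
      by (simp add: inner_diff_right h4_def \<delta>_def inner2 field_simps) (simp add: e_def algebra_simps)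
    have 5: "DD x h $ 5 = w $ 5"
      unfolding DD_comp hv s_def[symmetric] using e
      by (simp add: inner2 h4_def \<gamma>_def field_simps) (simp add: e_def algebra_simps)
    show ?thesis using 1 2 3 4 5 exhaust_5[of k] by auto
  qed
  then show "DD x h = w" by (simp add: vec_eq_iff)
qed
lemma range_facts:
  assumes "y \<in> range deltaE"
  shows "Q (y$1) (y$2) (y$3) \<ge> 0 \<and> y$1 \<ge> 0 \<and> y$2 \<ge> 0 \<and> y$3 \<ge> 0"
    and "Q (y$3) (y$4) (y$5) \<ge> 0 \<and> y$3 \<ge> 0 \<and> y$4 \<ge> 0 \<and> y$5 \<ge> 0"
proof -
  obtain z where z: "y = deltaE z" using assms by auto
  show "Q (y$1) (y$2) (y$3) \<ge> 0 \<and> y$1 \<ge> 0 \<and> y$2 \<ge> 0 \<and> y$3 \<ge> 0"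
    unfolding z heron1 by (simp add: dE)
  show "Q (y$3) (y$4) (y$5) \<ge> 0 \<and> y$3 \<ge> 0 \<and> y$4 \<ge> 0 \<and> y$5 \<ge> 0"
    unfolding z heron2 by (simp add: dE)
qed

theorem lemma4:
  fixes x :: "(real^2)^4"
  assumes "deltaE x \<in> interior (range deltaE)"
  shows "\<exists>D. (deltaE has_derivative D) (at x) \<and> dim (range D) = 2 * 4 - 3"
proof (intro exI conjI)
  show "(deltaE has_derivative DD x) (at x)" by (rule deltaE_der)
  have c1: "cr (x$1 - x$2) (x$2 - x$3) \<noteq> 0"
  proof
    assume h: "cr (x$1 - x$2) (x$2 - x$3) = 0"
    show False
      by (rule collinear_bad[of "range deltaE" 1 2 3 "deltaE x"])
        (use range_facts(1) assms h heron1 in auto)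
  qed
  have c2: "cr (x$1 - x$3) (x$3 - x$4) \<noteq> 0"
  proof
    assume h: "cr (x$1 - x$3) (x$3 - x$4) = 0"
    show False
      by (rule collinear_bad[of "range deltaE" 3 4 5 "deltaE x"])
        (use range_facts(2) assms h heron2 in auto)
  qed
  have "range (DD x) = UNIV" using surj_DD[OF c1 c2] by simp
  then show "dim (range (DD x)) = 2 * 4 - 3" by simp
qed
end
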